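(* Let the type be $\mathrm B_n$, $n\ge2$. For $j\in I$ and $k\in\mathbb Z_{\ge0}$: \[ \tilde c_{ji}(-2k-1)=0\ \text{ for } i\in I\setminus\{n\},\qquad \tilde c_{jn}(-2k-2)=0. \] For $j\in I$ and $k=0,1,\dots,n-1$: \[ \tilde c_{ji}(-2k)=\begin{cases}1&\text{if }(\ast)\\0&\text{otherwise}\end{cases}\ (i\in I\setminus\{n\}),\qquad \tilde c_{jn}(-2k-1)=\begin{cases}1&\text{if }k+j-n\in2\mathbb Z_{\ge0}\\0&\text{otherwise.}\end{cases} \] Here $(\ast)$ is the condition that either - [$i+1\le k+j\le 2n-i-1$ and $1-i\le k-j\le i-1$, with $(k+j)-(i+1)\in2\mathbb Z_{\ge0}$ and $(k-j)-(1-i)\in2\mathbb Z_{\ge0}$], or - [$2n-i\le k+j$]. Moreover, for $j\in I$ and $k=0,1,\dots,n-1$: \[ \tilde c_{ji}(-2k)=\tilde c_{ji}(-4n+2+2k)\ (i\in I\setminus\{n\}),\qquad \tilde c_{jn}(-2k-1)=\tilde c_{jn}(-4n+3+2k). \]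
   Context: Let $\mathfrak g$ be of type $\mathrm B_n$ ($n\ge2$), with $I=\{1,\dots,n\}$ and $\alpha_n$ short. The Cartan matrix $c_{ij}=\langle h_i,\alpha_j\rangle$ has: - $c_{ii}=2$; - $c_{i,i+1}=c_{i+1,i}=-1$ for $1\le i\le n-2$; - $c_{n-1,n}=-1$ and $c_{n,n-1}=-2$; - all other entries $0$. Put $r_i=2$ for $i\le n-1$ and $r_n=1$. Define the quantum Cartan matrix $C(z)$ over $\mathbb Z[z^{\pm1}]$ by $C(z)_{ii}=z^{r_i}+z^{-r_i}$ and $C(z)_{ij}=[c_{ij}]_z=(z^{c_{ij}}-z^{-c_{ij}})/(z-z^{-1})$ for $i\neq j$. Let $\widetilde C(z)=C(z)^{-1}$, with entries regarded as elements of $\mathbb Z((z^{-1}))$, and write $\widetilde C(z)_{ji}=\sum_{r\in\mathbb Z}\tilde c_{ji}(r)z^r$. *)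

theory Defs
  imports "HOL-Computational_Algebra.Formal_Laurent_Series"
begin

text \<open>Laurent series in z^{-1}: we use the fls type in the variable X = z^{-1},
  so z is represented by fls_X_inv and the coefficient of z^r in f is fls_nth f (-r).\<close>

definition qz :: "rat fls" where
  "qz = fls_X_inv"

text \<open>Cartan matrix of type B_n (1-indexed, alpha_n short).\<close>
definition cartanB :: "nat \<Rightarrow> nat \<Rightarrow> nat \<Rightarrow> int" where
  "cartanB n i j =
     (if i = j then 2
      else if (i + 1 = j \<or> j + 1 = i) \<and> 1 \<le> i \<and> 1 \<le> j \<and> i \<le> n \<and> j \<le> n then
        (if i = n \<and> j = n - 1 then -2 else -1)
      else 0)"

definition rB :: "nat \<Rightarrow> nat \<Rightarrow> int" where
  "rB n i = (if i = n then 1 else 2)"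

definition qint :: "int \<Rightarrow> rat fls" where
  "qint m = (qz powi m - qz powi (-m)) / (qz - qz powi (-1))"

definition qCartanB :: "nat \<Rightarrow> nat \<Rightarrow> nat \<Rightarrow> rat fls" where
  "qCartanB n i j =
     (if i = j then qz powi (rB n i) + qz powi (- rB n i) else qint (cartanB n i j))"

text \<open>The inverse matrix tilde C(z) = C(z)^{-1}, indices in {1..n}
  (entries outside the index range set to 0 for uniqueness).\<close>
definition is_inverse_on :: "nat \<Rightarrow> (nat \<Rightarrow> nat \<Rightarrow> 'a::field) \<Rightarrow> (nat \<Rightarrow> nat \<Rightarrow> 'a) \<Rightarrow> bool" where
  "is_inverse_on n A B \<longleftrightarrow>
     (\<forall>i\<in>{1..n}. \<forall>k\<in>{1..n}. (\<Sum>j=1..n. A i j * B j k) = (if i = k then 1 else 0)) \<and>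
     (\<forall>i\<in>{1..n}. \<forall>k\<in>{1..n}. (\<Sum>j=1..n. B i j * A j k) = (if i = k then 1 else 0)) \<and>
     (\<forall>i j. \<not> (i \<in> {1..n} \<and> j \<in> {1..n}) \<longrightarrow> B i j = 0)"

definition invQCartanB :: "nat \<Rightarrow> nat \<Rightarrow> nat \<Rightarrow> rat fls" where
  "invQCartanB n = (THE B. is_inverse_on n (qCartanB n) B)"

definition ctilde :: "nat \<Rightarrow> nat \<Rightarrow> nat \<Rightarrow> int \<Rightarrow> rat" where
  "ctilde n j i r = fls_nth (invQCartanB n j i) (- r)"

end

theory Submission
  imports Defs
begin

definition mo :: "'a::field \<Rightarrow> int \<Rightarrow> 'a" where "mo x e = x powi e"

context fixes x :: "'a::field" assumes xnz: "x \<noteq> 0"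
begin
lemma mo_mult: "mo x a * mo x b = mo x (a+b)"
  using xnz by (simp add: power_int_add mo_def)
lemma mo_mult2: "mo x a * (mo x b * c) = mo x (a+b) * c"
  using xnz by (simp add: power_int_add mo_def)
lemmas mo_simps = mo_mult mo_mult2

definition sq where "sq a = mo x (2*a) - mo x (-2*a)"
definition gM where "gM n M = mo x (2*n-1-2*M) + mo x (2*M-2*n+1)"

lemma L1: "sq (a+1) + sq (a-1) = (mo x 2 + mo x (-2)) * sq a"
  unfolding sq_def by (simp add: algebra_simps mo_simps)
lemma L2: "gM n (M+1) + gM n (M-1) = (mo x 2 + mo x (-2)) * gM n M"
  unfolding gM_def by (simp add: algebra_simps mo_simps)
lemma L3: "gM n n = mo x 1 + mo x (-1)" "gM n (n-1) = mo x 1 + mo x (-1)"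
  unfolding gM_def by (simp_all add: algebra_simps mo_simps)
lemma Ldiag: "(mo x 2 + mo x (-2)) * sq i * gM n i - sq (i-1) * gM n i - sq i * gM n (i+1) = sq 1 * gM n 0"
  unfolding gM_def sq_def by (simp add: algebra_simps mo_simps)
lemma Lnn: "(mo x 1 + mo x (-1)) * (sq n - sq (n-1)) = sq 1 * gM n 0"
  unfolding gM_def sq_def by (simp add: algebra_simps mo_simps)
lemma LP1: "sq A * gM n M * (1 + mo x (4*n-2)) * (mo x 4 - 1) = ((mo x (2*M-2*A+2+4*A) - mo x (2*M-2*A+2)) + (mo x (4*n-2*M-2*A+4*A) - mo x (4*n-2*M-2*A))) * (sq 1 * gM n 0)"
  unfolding gM_def sq_def by (simp add: algebra_simps mo_simps)
lemma LP2: "sq j * (1 + mo x (4*n-2)) * (mo x 4 - 1) = (mo x (2*n+1-2*j+4*j) - mo x (2*n+1-2*j)) * (sq 1 * gM n 0)"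
  unfolding gM_def sq_def by (simp add: algebra_simps mo_simps)
end

abbreviation QX :: "rat fls" where "QX \<equiv> fls_X"
lemmas QL1 = L1[OF fls_X_nonzero] and QL2 = L2[OF fls_X_nonzero] and QL3 = L3[OF fls_X_nonzero]
  and QLdiag = Ldiag[OF fls_X_nonzero] and QLnn = Lnn[OF fls_X_nonzero]
  and Qmo_simps = mo_simps[OF fls_X_nonzero]

lemma mo_nth: "fls_nth (mo QX e) k = (if k = e then 1 else 0)"
  by (simp add: mo_def)
lemma mo0[simp]: "mo x 0 = 1" by (simp add: mo_def)

lemma qz_q: "qz = fls_X powi (-1)"
  unfolding qz_def fls_X_inv_conv_shift_1 fls_X_power_int by simp
lemma qz_powi_mo: "qz powi r = mo QX (-r)"
  unfolding mo_def by (simp only: qz_q power_int_mult[symmetric]) simp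
lemma qz_mo: "qz = mo QX (-1)"
  unfolding mo_def by (rule qz_q)

lemma den_nz: "mo QX (-1) - mo QX 1 \<noteq> 0"
  by (rule fls_nonzeroI[of _ "-1"]) (simp add: mo_nth)

lemma qint0: "qint 0 = 0" by (simp add: qint_def)
lemma qint_m1: "qint (-1) = -1"
  using den_nz unfolding qint_def qz_powi_mo unfolding qz_mo by (simp add: field_simps)
lemma qint_m2: "qint (-2) = - (mo QX 1 + mo QX (-1))"
proof -
  have "(mo QX 1 + mo QX (-1)) * (mo QX (-1) - mo QX 1) = mo QX (-2) - mo QX 2"
    by (simp add: algebra_simps Qmo_simps)
  then show ?thesis
    using den_nz unfolding qint_def qz_powi_mo unfolding qz_mo by (simp add: field_simps)
qed

lemma C_diag: "qCartanB n i i = (if i = n then mo QX 1 + mo QX (-1) else mo QX 2 + mo QX (-2))"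
  by (simp add: qCartanB_def rB_def qz_powi_mo add.commute)

lemma C_far: "i \<noteq> l \<Longrightarrow> l + 1 \<noteq> i \<Longrightarrow> i + 1 \<noteq> l \<Longrightarrow> qCartanB n i l = 0"
  by (simp add: qCartanB_def cartanB_def qint0)

lemma C_down: "2 \<le> i \<Longrightarrow> i \<le> n \<Longrightarrow> qCartanB n i (i-1) = (if i = n then - (mo QX 1 + mo QX (-1)) else -1)"
proof -
  assume a: "2 \<le> i" "i \<le> n"
  have "cartanB n i (i-1) = (if i = n then -2 else -1)" using a by (auto simp: cartanB_def)
  moreover have "i \<noteq> i - 1" using a by simp
  ultimately show ?thesis by (simp add: qCartanB_def qint_m1 qint_m2)
qed

lemma C_up: "1 \<le> i \<Longrightarrow> i < n \<Longrightarrow> qCartanB n i (i+1) = -1"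
proof -
  assume a: "1 \<le> i" "i < n"
  have "cartanB n i (i+1) = -1" using a by (auto simp: cartanB_def)
  then show ?thesis by (simp add: qCartanB_def qint_m1)
qed

lemma sum_nbr:
  fixes h :: "nat \<Rightarrow> 'a::comm_monoid_add"
  assumes "1 \<le> i" "i \<le> n" "\<And>l. l \<noteq> i \<Longrightarrow> l + 1 \<noteq> i \<Longrightarrow> i + 1 \<noteq> l \<Longrightarrow> h l = 0"
  shows "(\<Sum>l=1..n. h l) = h i + (if 2 \<le> i then h (i-1) else 0) + (if i < n then h (i+1) else 0)"
proof -
  define S where "S = {i} \<union> (if 2 \<le> i then {i-1} else {}) \<union> (if i < n then {i+1} else {})"
  have "(\<Sum>l=1..n. h l) = (\<Sum>l\<in>S. h l)"
  proof (rule sum.mono_neutral_right)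
    show "finite {1..n}" by simp
    show "S \<subseteq> {1..n}" using assms(1,2) unfolding S_def by (auto split: if_split)
    show "\<forall>l\<in>{1..n} - S. h l = 0"
    proof
      fix l assume l: "l \<in> {1..n} - S"
      then have "l \<noteq> i" "\<not> (2 \<le> i \<and> l = i - 1)" "\<not> (i < n \<and> l = i + 1)" "1 \<le> l" "l \<le> n"
        unfolding S_def by (auto split: if_splits)
      then have "l + 1 \<noteq> i" "i + 1 \<noteq> l" by auto
      then show "h l = 0" using assms(3) \<open>l \<noteq> i\<close> by blast
    qed
  qed
  also have "\<dots> = h i + (if 2 \<le> i then h (i-1) else 0) + (if i < n then h (i+1) else 0)"
    unfolding S_def using assms(1,2) by (simp split: if_split add: algebra_simps)
  finally show ?thesis .
qed

abbreviation "SS a \<equiv> sq QX a"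
abbreviation "GG n M \<equiv> gM QX (int n) M"
abbreviation "k1 \<equiv> mo QX 1 + mo QX (-1)"
abbreviation "k2 \<equiv> mo QX 2 + mo QX (-2)"

definition numer :: "nat \<Rightarrow> nat \<Rightarrow> nat \<Rightarrow> rat fls" where
  "numer n l j = (if j < n then SS (int (min l j)) * GG n (int (max l j)) else SS (int l))"
definition EE :: "nat \<Rightarrow> rat fls" where "EE n = SS 1 * GG n 0"

lemma SS0: "SS 0 = 0" by (simp add: sq_def)
lemma numer0: "numer n 0 j = 0" by (simp add: numer_def SS0)

lemma Cdiag': "qCartanB n i i = (if i = n then k1 else k2)" by (simp add: C_diag)

lemma numer_lt: "j < n \<Longrightarrow> l \<le> j \<Longrightarrow> numer n l j = SS (int l) * GG n (int j)"
  by (simp add: numer_def min_def max_def)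
lemma numer_gt: "j < n \<Longrightarrow> j \<le> l \<Longrightarrow> numer n l j = SS (int j) * GG n (int l)"
  by (simp add: numer_def min_def max_def)
lemma numer_n: "numer n l n = SS (int l)"
  by (simp add: numer_def)

lemma row_eq:
  assumes i: "1 \<le> i" "i \<le> n"
  shows "(\<Sum>l=1..n. qCartanB n i l * numer n l j) =
      (if i = n then k1 else k2) * numer n i j + (if i = n then -k1 else -1) * numer n (i-1) j
      + (if i < n then - numer n (i+1) j else 0)"
proof -
  have "(\<Sum>l=1..n. qCartanB n i l * numer n l j) = qCartanB n i i * numer n i j
     + (if 2 \<le> i then qCartanB n i (i-1) * numer n (i-1) j else 0)
     + (if i < n then qCartanB n i (i+1) * numer n (i+1) j else 0)"
    by (rule sum_nbr) (use i in \<open>auto simp: C_far\<close>)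
  also have "(if 2 \<le> i then qCartanB n i (i-1) * numer n (i-1) j else 0)
      = (if i = n then -k1 else -1) * numer n (i-1) j"
  proof (cases "i = 1")
    case False
    then have "2 \<le> i" using i by simp
    then show ?thesis using C_down[OF \<open>2 \<le> i\<close> i(2)] by simp
  qed (simp add: numer0)
  also have "(if i < n then qCartanB n i (i+1) * numer n (i+1) j else 0)
      = (if i < n then - numer n (i+1) j else 0)"
    using i C_up[of i n] by auto
  finally show ?thesis by (simp add: Cdiag')
qed

lemma rc1: assumes "1 \<le> i" "i < j" "j < n"
  shows "k2 * numer n i j - numer n (i-1) j - numer n (i+1) j = 0"
proof -
  have h: "SS (int i + 1) + SS (int i - 1) = k2 * SS (int i)" by (rule QL1)
  have "numer n i j = SS (int i) * GG n (int j)" "numer n (i-1) j = SS (int i - 1) * GG n (int j)"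
        "numer n (i+1) j = SS (int i + 1) * GG n (int j)"
    using assms by (simp_all add: numer_lt of_nat_diff add.commute)
  then have "k2 * numer n i j - numer n (i-1) j - numer n (i+1) j = (k2 * SS (int i) - (SS (int i + 1) + SS (int i - 1))) * GG n (int j)"
    by (simp add: algebra_simps)
  then show ?thesis using h by simp
qed

lemma rc2: assumes "1 \<le> i" "i < n"
  shows "k2 * numer n i i - numer n (i-1) i - numer n (i+1) i = EE n"
proof -
  have h: "k2 * SS (int i) * GG n (int i) - SS (int i - 1) * GG n (int i) - SS (int i) * GG n (int i + 1) = SS 1 * GG n 0"
    by (rule QLdiag)
  have "numer n i i = SS (int i) * GG n (int i)" "numer n (i-1) i = SS (int i - 1) * GG n (int i)"
        "numer n (i+1) i = SS (int i) * GG n (int i + 1)"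
    using assms by (simp_all add: numer_lt numer_gt of_nat_diff add.commute)
  then show ?thesis using h by (simp add: EE_def mult.assoc)
qed

lemma rc3: assumes "j < i" "i < n"
  shows "k2 * numer n i j - numer n (i-1) j - numer n (i+1) j = 0"
proof -
  have h: "GG n (int i + 1) + GG n (int i - 1) = k2 * GG n (int i)" by (rule QL2)
  have "numer n i j = SS (int j) * GG n (int i)" "numer n (i-1) j = SS (int j) * GG n (int i - 1)"
        "numer n (i+1) j = SS (int j) * GG n (int i + 1)"
    using assms by (simp_all add: numer_gt of_nat_diff add.commute)
  then have "k2 * numer n i j - numer n (i-1) j - numer n (i+1) j = (k2 * GG n (int i) - (GG n (int i + 1) + GG n (int i - 1))) * SS (int j)"
    by (simp add: algebra_simps)
  then show ?thesis using h by simp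
qed

lemma rc4: assumes "j < n"
  shows "k1 * numer n n j - k1 * numer n (n-1) j = 0"
proof -
  have h: "GG n (int n) = k1" "GG n (int n - 1) = k1" by (rule QL3)+
  have "numer n n j = SS (int j) * GG n (int n)" "numer n (n-1) j = SS (int j) * GG n (int n - 1)"
    using assms by (simp_all add: numer_gt of_nat_diff)
  then show ?thesis using h by simp
qed

lemma rc5: assumes "1 \<le> i" "i < n"
  shows "k2 * numer n i n - numer n (i-1) n - numer n (i+1) n = 0"
proof -
  have h: "SS (int i + 1) + SS (int i - 1) = k2 * SS (int i)" by (rule QL1)
  have "numer n i n = SS (int i)" "numer n (i-1) n = SS (int i - 1)" "numer n (i+1) n = SS (int i + 1)"
    using assms by (simp_all add: numer_n of_nat_diff add.commute)
  then show ?thesis using h by (simp add: algebra_simps)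
qed

lemma rc6: assumes "1 \<le> n"
  shows "k1 * numer n n n - k1 * numer n (n-1) n = EE n"
proof -
  have h: "k1 * (SS (int n) - SS (int n - 1)) = SS 1 * GG n 0" by (rule QLnn)
  have "numer n n n = SS (int n)" "numer n (n-1) n = SS (int n - 1)"
    using assms by (simp_all add: numer_n of_nat_diff)
  then show ?thesis using h by (simp add: EE_def right_diff_distrib)
qed

lemma row_sum:
  assumes n: "2 \<le> n" and i: "1 \<le> i" "i \<le> n" and j: "1 \<le> j" "j \<le> n"
  shows "(\<Sum>l=1..n. qCartanB n i l * numer n l j) = (if i = j then EE n else 0)"
proof -
  note eq = row_eq[OF i]
  consider "j < n" "i < j" | "j < n" "i = j" | "j < n" "j < i" "i < n" | "j < n" "i = n"
    | "j = n" "i < n" | "j = n" "i = n" using i j by linarith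
  then show ?thesis
  proof cases
    case 1 then show ?thesis unfolding eq using rc1[of i j n] 1 i by simp
  next
    case 2 then show ?thesis unfolding eq using rc2[of i n] 2 i by simp
  next
    case 3 then show ?thesis unfolding eq using rc3[of j i n] 3 by simp
  next
    case 4 then show ?thesis unfolding eq using rc4[of j n] 4 by (simp add: algebra_simps)
  next
    case 5 then show ?thesis unfolding eq using rc5[of i n] 5 i by simp
  next
    case 6 then show ?thesis unfolding eq using rc6[of n] 6 n by (simp add: algebra_simps)
  qed
qed

lemma numer_col0: "0 < n \<Longrightarrow> numer n i 0 = 0" by (simp add: numer_def SS0)

lemma C_up': "2 \<le> j \<Longrightarrow> j \<le> n \<Longrightarrow> qCartanB n (j-1) j = -1"
  using C_up[of "j-1" n] by simp

lemma col_eq: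
  assumes j: "1 \<le> j" "j \<le> n"
  shows "(\<Sum>l=1..n. numer n i l * qCartanB n l j) =
      (if j = n then k1 else k2) * numer n i j - numer n i (j-1)
      + (if j < n then (if j + 1 = n then -k1 else -1) * numer n i (j+1) else 0)"
proof -
  have "(\<Sum>l=1..n. numer n i l * qCartanB n l j) = numer n i j * qCartanB n j j
     + (if 2 \<le> j then numer n i (j-1) * qCartanB n (j-1) j else 0)
     + (if j < n then numer n i (j+1) * qCartanB n (j+1) j else 0)"
    by (rule sum_nbr) (use j in \<open>auto simp: C_far\<close>)
  also have "(if 2 \<le> j then numer n i (j-1) * qCartanB n (j-1) j else 0) = - numer n i (j-1)"
  proof (cases "j = 1")
    case False
    then have "2 \<le> j" using j by simp
    then show ?thesis using C_up'[OF \<open>2 \<le> j\<close> j(2)] by simp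
  qed (use j in \<open>simp add: numer_col0\<close>)
  also have "(if j < n then numer n i (j+1) * qCartanB n (j+1) j else 0)
      = (if j < n then (if j + 1 = n then -k1 else -1) * numer n i (j+1) else 0)"
    using C_down[of "j+1" n] j by auto
  finally show ?thesis by (simp add: Cdiag' algebra_simps)
qed

lemma cc1: assumes "1 \<le> i" "i < j" "j < n"
  shows "k2 * numer n i j - numer n i (j-1) + (if j + 1 = n then -k1 else -1) * numer n i (j+1) = 0"
proof -
  have h: "GG n (int j + 1) + GG n (int j - 1) = k2 * GG n (int j)" by (rule QL2)
  have h3: "GG n (int n) = k1" by (rule QL3)
  have a: "numer n i j = SS (int i) * GG n (int j)" "numer n i (j-1) = SS (int i) * GG n (int j - 1)"
    using assms by (simp_all add: numer_lt of_nat_diff)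
  have b: "(if j + 1 = n then -k1 else -1) * numer n i (j+1) = - SS (int i) * GG n (int j + 1)"
  proof (cases "j + 1 = n")
    case True
    then have e: "int j + 1 = int n" by simp
    show ?thesis unfolding e using True h3 by (simp add: numer_n algebra_simps)
  next
    case False
    then show ?thesis using assms by (simp add: numer_lt add.commute)
  qed
  have "k2 * numer n i j - numer n i (j-1) + (if j + 1 = n then -k1 else -1) * numer n i (j+1)
     = (k2 * GG n (int j) - (GG n (int j + 1) + GG n (int j - 1))) * SS (int i)"
    unfolding b a by (simp add: algebra_simps)
  then show ?thesis using h by simp
qed

lemma cc2: assumes "1 \<le> j" "j < n"
  shows "k2 * numer n j j - numer n j (j-1) + (if j + 1 = n then -k1 else -1) * numer n j (j+1) = EE n"
proof -
  have h: "k2 * SS (int j) * GG n (int j) - SS (int j - 1) * GG n (int j) - SS (int j) * GG n (int j + 1) = SS 1 * GG n 0"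
    by (rule QLdiag)
  have h3: "GG n (int n) = k1" by (rule QL3)
  have a: "numer n j j = SS (int j) * GG n (int j)" "numer n j (j-1) = SS (int j - 1) * GG n (int j)"
    using assms by (simp_all add: numer_lt numer_gt of_nat_diff)
  have b: "(if j + 1 = n then -k1 else -1) * numer n j (j+1) = - SS (int j) * GG n (int j + 1)"
  proof (cases "j + 1 = n")
    case True
    then have e: "int j + 1 = int n" by simp
    show ?thesis unfolding e using True h3 by (simp add: numer_n algebra_simps)
  next
    case False
    then show ?thesis using assms by (simp add: numer_lt add.commute)
  qed
  show ?thesis unfolding b a using h by (simp add: EE_def algebra_simps)
qed

lemma cc3: assumes "1 \<le> j" "j < i" "i \<le> n"
  shows "k2 * numer n i j - numer n i (j-1) + (if j + 1 = n then -k1 else -1) * numer n i (j+1) = 0"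
proof -
  have h: "SS (int j + 1) + SS (int j - 1) = k2 * SS (int j)" by (rule QL1)
  have h3: "GG n (int n) = k1" by (rule QL3)
  have a: "numer n i j = SS (int j) * GG n (int i)" "numer n i (j-1) = SS (int j - 1) * GG n (int i)"
    using assms by (simp_all add: numer_gt of_nat_diff)
  have b: "(if j + 1 = n then -k1 else -1) * numer n i (j+1) = - SS (int j + 1) * GG n (int i)"
  proof (cases "j + 1 = n")
    case True
    then have "i = n" and e: "int j + 1 = int n" using assms by auto
    show ?thesis unfolding e using True h3 \<open>i = n\<close> by (simp add: numer_n algebra_simps)
  next
    case False
    then show ?thesis using assms by (simp add: numer_gt add.commute)
  qed
  have "k2 * numer n i j - numer n i (j-1) + (if j + 1 = n then -k1 else -1) * numer n i (j+1)
     = (k2 * SS (int j) - (SS (int j + 1) + SS (int j - 1))) * GG n (int i)"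
    unfolding b a by (simp add: algebra_simps)
  then show ?thesis using h by simp
qed

lemma cc4: assumes "i < n"
  shows "k1 * numer n i n - numer n i (n-1) = 0"
proof -
  have h: "GG n (int n - 1) = k1" by (rule QL3)
  have "numer n i n = SS (int i)" "numer n i (n-1) = SS (int i) * GG n (int n - 1)"
    using assms by (simp_all add: numer_n numer_lt of_nat_diff)
  then show ?thesis using h by (simp add: algebra_simps)
qed

lemma cc5: assumes "1 \<le> n"
  shows "k1 * numer n n n - numer n n (n-1) = EE n"
proof -
  have h: "k1 * (SS (int n) - SS (int n - 1)) = SS 1 * GG n 0" by (rule QLnn)
  have h3: "GG n (int n) = k1" by (rule QL3)
  have "numer n n n = SS (int n)" "numer n n (n-1) = SS (int n - 1) * GG n (int n)"
    using assms by (simp_all add: numer_n numer_gt of_nat_diff)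
  then show ?thesis using h h3 by (simp add: EE_def algebra_simps)
qed

lemma col_sum:
  assumes n: "2 \<le> n" and i: "1 \<le> i" "i \<le> n" and j: "1 \<le> j" "j \<le> n"
  shows "(\<Sum>l=1..n. numer n i l * qCartanB n l j) = (if i = j then EE n else 0)"
proof -
  note eq = col_eq[OF j, of i]
  consider "j < n" "i < j" | "j < n" "i = j" | "j < n" "j < i" | "j = n" "i < n" | "j = n" "i = n"
    using i j by linarith
  then show ?thesis
  proof cases
    case 1 then show ?thesis unfolding eq using cc1[of i j n] i by simp
  next
    case 2 then show ?thesis unfolding eq using cc2[of j n] j by simp
  next
    case 3 then show ?thesis unfolding eq using cc3[of j i n] i j by simp
  next
    case 4 then show ?thesis unfolding eq using cc4[of i n] by simp
  next
    case 5 then show ?thesis unfolding eq using cc5[of n] n by simp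
  qed
qed

lemma inv_unique:
  fixes A B1 B2 :: "nat \<Rightarrow> nat \<Rightarrow> 'a::field"
  assumes h1: "is_inverse_on n A B1" and h2: "is_inverse_on n A B2"
  shows "B1 = B2"
proof (intro ext)
  fix i k
  show "B1 i k = B2 i k"
  proof (cases "i \<in> {1..n} \<and> k \<in> {1..n}")
    case False
    then show ?thesis using h1 h2 unfolding is_inverse_on_def by auto
  next
    case True
    have "(\<Sum>j=1..n. B1 i j * (if j = k then 1 else 0)) = (\<Sum>j=1..n. if j = k then B1 i j else 0)"
      by (intro sum.cong) auto
    then have "B1 i k = (\<Sum>j=1..n. B1 i j * (if j = k then 1 else 0))"
      using True by (simp add: sum.delta')
    also have "\<dots> = (\<Sum>j=1..n. B1 i j * (\<Sum>l=1..n. A j l * B2 l k))"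
      using h2 True unfolding is_inverse_on_def by (intro sum.cong) auto
    also have "\<dots> = (\<Sum>j=1..n. \<Sum>l=1..n. B1 i j * A j l * B2 l k)"
      by (simp add: sum_distrib_left mult.assoc)
    also have "\<dots> = (\<Sum>l=1..n. \<Sum>j=1..n. B1 i j * A j l * B2 l k)"
      by (rule sum.swap)
    also have "\<dots> = (\<Sum>l=1..n. (\<Sum>j=1..n. B1 i j * A j l) * B2 l k)"
      by (simp add: sum_distrib_right)
    also have "\<dots> = (\<Sum>l=1..n. (if i = l then 1 else 0) * B2 l k)"
      using h1 True unfolding is_inverse_on_def by (intro sum.cong) auto
    also have "\<dots> = (\<Sum>l=1..n. if l = i then B2 l k else 0)"
      by (intro sum.cong) auto
    also have "\<dots> = B2 i k" using True by (simp add: sum.delta')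
    finally show ?thesis .
  qed
qed

definition Bc :: "nat \<Rightarrow> nat \<Rightarrow> nat \<Rightarrow> rat fls" where
  "Bc n l j = (if l \<in> {1..n} \<and> j \<in> {1..n} then numer n l j / EE n else 0)"

lemma EE_nz: assumes "1 \<le> n" shows "EE n \<noteq> 0"
proof -
  have "SS 1 \<noteq> 0" by (rule fls_nonzeroI[of _ 2]) (simp add: sq_def mo_nth)
  moreover have "GG n 0 \<noteq> 0"
    by (rule fls_nonzeroI[of _ "2 * int n - 1"]) (use assms in \<open>simp add: gM_def mo_nth\<close>)
  ultimately show ?thesis by (simp add: EE_def)
qed

lemma Bc_inverse: assumes n: "2 \<le> n" shows "is_inverse_on n (qCartanB n) (Bc n)"
  unfolding is_inverse_on_def
proof (intro conjI ballI allI impI)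
  fix i k assume i: "i \<in> {1..n}" and k: "k \<in> {1..n}"
  have E: "EE n \<noteq> 0" using EE_nz n by simp
  have "(\<Sum>j=1..n. qCartanB n i j * Bc n j k) = (\<Sum>j=1..n. qCartanB n i j * numer n j k) / EE n"
    unfolding sum_divide_distrib using k by (intro sum.cong) (auto simp: Bc_def)
  also have "\<dots> = (if i = k then 1 else 0)" using row_sum[of n i k] n i k E by auto
  finally show "(\<Sum>j=1..n. qCartanB n i j * Bc n j k) = (if i = k then 1 else 0)" .
  have "(\<Sum>j=1..n. Bc n i j * qCartanB n j k) = (\<Sum>j=1..n. numer n i j * qCartanB n j k) / EE n"
    unfolding sum_divide_distrib using i by (intro sum.cong) (auto simp: Bc_def)
  also have "\<dots> = (if i = k then 1 else 0)" using col_sum[of n i k] n i k E by auto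
  finally show "(\<Sum>j=1..n. Bc n i j * qCartanB n j k) = (if i = k then 1 else 0)" .
next
  fix i j assume "\<not> (i \<in> {1..n} \<and> j \<in> {1..n})"
  then show "Bc n i j = 0" by (auto simp: Bc_def)
qed

lemma inv_eq: assumes "2 \<le> n" shows "invQCartanB n = Bc n"
  unfolding invQCartanB_def
  by (rule the_equality) (use Bc_inverse[OF assms] inv_unique in blast)+

lemma mo_times_nth: "fls_nth (mo QX e * F) m = fls_nth F (m - e)"
  by (simp add: mo_def fls_X_intpow_times_conv_shift)

definition dv :: "int \<Rightarrow> rat fls \<Rightarrow> int \<Rightarrow> rat" where
  "dv N P m = (if m < 0 then 0 else (-1) ^ (nat (m div N)) * fls_nth P (m mod N))"

lemma div_series:
  assumes N: "N > 0" and P: "\<And>m. m < 0 \<or> N \<le> m \<Longrightarrow> fls_nth P m = 0"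
  shows "P / (1 + mo QX N) = Abs_fls (dv N P)"
proof -
  define G where "G = Abs_fls (dv N P)"
  have Gn: "fls_nth G m = dv N P m" for m
    unfolding G_def by (rule nth_Abs_fls_lower_bound[of 0]) (simp add: dv_def)
  have nz: "1 + mo QX N \<noteq> 0"
    by (rule fls_nonzeroI[of _ 0]) (use N in \<open>simp add: mo_nth\<close>)
  have "G * (1 + mo QX N) = P"
  proof (rule fls_eqI)
    fix m
    have "fls_nth (G * (1 + mo QX N)) m = dv N P m + dv N P (m - N)"
      by (simp add: distrib_left mult.commute[of G] mo_times_nth Gn)
    also have "\<dots> = fls_nth P m"
    proof (cases "m < 0")
      case True then show ?thesis using P N by (simp add: dv_def)
    next
      case False
      show ?thesis
      proof (cases "m < N")
        case True
        then show ?thesis using False N by (simp add: dv_def)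
      next
        case False2: False
        have d: "m div N = (m - N) div N + 1" using div_add_self2[of N "m - N"] N by simp
        have md: "m mod N = (m - N) mod N" using mod_add_self2[of "m - N" N] by simp
        have "(m - N) div N \<ge> 0" using False2 N by (simp add: pos_imp_zdiv_nonneg_iff)
        then have "nat (m div N) = Suc (nat ((m - N) div N))" using d by simp
        then show ?thesis using False False2 N P[of m] md by (simp add: dv_def)
      qed
    qed
    finally show "fls_nth (G * (1 + mo QX N)) m = fls_nth P m" .
  qed
  then show ?thesis using nz unfolding G_def by (simp add: field_simps)
qed

definition ap :: "int \<Rightarrow> int \<Rightarrow> int \<Rightarrow> bool" where
  "ap c a m = (c \<le> m \<and> m < c + 4*a \<and> (4::int) dvd (m - c))"
definition APf :: "int \<Rightarrow> int \<Rightarrow> rat fls" where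
  "APf c a = Abs_fls (\<lambda>m. if ap c a m then 1 else 0)"

lemma APf_nth: "fls_nth (APf c a) m = (if ap c a m then 1 else 0)"
  unfolding APf_def by (rule nth_Abs_fls_lower_bound[of c]) (simp add: ap_def)

lemma ap_shift: "(if ap c a (m - 4) then 1 else 0) - (if ap c a m then 1 else 0)
   = (if m = c + 4*a then 1 else 0) - (if m = c then (1::rat) else 0)" if "0 \<le> a"
proof -
  have "ap c a (m - 4) \<longleftrightarrow> ap c a m \<and> m \<noteq> c \<or> (m = c + 4*a \<and> 0 < a)"
    unfolding ap_def using that by presburger
  moreover have "m = c \<longrightarrow> (ap c a m \<longleftrightarrow> 0 < a)" unfolding ap_def by simp
  moreover have "m = c + 4*a \<longrightarrow> \<not> ap c a m" unfolding ap_def by simp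
  ultimately show ?thesis using that by (auto split: if_splits)
qed

lemma APf_mul: "0 \<le> a \<Longrightarrow> (mo QX 4 - 1) * APf c a = mo QX (c + 4*a) - mo QX c"
  by (rule fls_eqI) (simp add: left_diff_distrib mo_times_nth APf_nth ap_shift mo_nth)

lemma m41_nz: "mo QX 4 - 1 \<noteq> 0"
  by (rule fls_nonzeroI[of _ 0]) (simp add: mo_nth)

definition PP :: "nat \<Rightarrow> nat \<Rightarrow> nat \<Rightarrow> rat fls" where
  "PP n j i = (if i < n then
      APf (2*int (max j i) - 2*int (min j i) + 2) (int (min j i))
    + APf (4*int n - 2*int (max j i) - 2*int (min j i)) (int (min j i))
    else APf (2*int n + 1 - 2*int j) (int j))"

lemma Bc_PP:
  assumes n: "2 \<le> n" and j: "1 \<le> j" "j \<le> n" and i: "1 \<le> i" "i \<le> n"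
  shows "Bc n j i = PP n j i / (1 + mo QX (4 * int n - 2))"
proof -
  have E: "EE n \<noteq> 0" using EE_nz n by simp
  have nz: "1 + mo QX (4 * int n - 2) \<noteq> 0"
    by (rule fls_nonzeroI[of _ 0]) (use n in \<open>simp add: mo_nth\<close>)
  have key: "(mo QX 4 - 1) * (numer n j i * (1 + mo QX (4 * int n - 2))) = (mo QX 4 - 1) * (PP n j i * EE n)"
  proof (cases "i < n")
    case True
    have e1: "(mo QX 4 - 1) * PP n j i = (mo QX (2*int (max j i) - 2*int (min j i) + 2 + 4 * int (min j i)) - mo QX (2*int (max j i) - 2*int (min j i) + 2))
       + (mo QX (4*int n - 2*int (max j i) - 2*int (min j i) + 4 * int (min j i)) - mo QX (4*int n - 2*int (max j i) - 2*int (min j i)))"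
      using True by (simp add: PP_def distrib_left APf_mul)
    have e2: "numer n j i = SS (int (min j i)) * GG n (int (max j i))" using True by (simp add: numer_def)
    have "(mo QX 4 - 1) * (numer n j i * (1 + mo QX (4 * int n - 2)))
        = SS (int (min j i)) * GG n (int (max j i)) * (1 + mo QX (4 * int n - 2)) * (mo QX 4 - 1)"
      by (simp only: e2 mult_ac)
    also have "\<dots> = ((mo QX 4 - 1) * PP n j i) * EE n"
      unfolding e1 EE_def by (rule LP1[OF fls_X_nonzero])
    finally show ?thesis by (simp only: mult_ac)
  next
    case False
    then have "i = n" using i by simp
    have e1: "(mo QX 4 - 1) * PP n j i = mo QX (2*int n + 1 - 2*int j + 4 * int j) - mo QX (2*int n + 1 - 2*int j)"
      using False by (simp add: PP_def APf_mul)
    have e2: "numer n j i = SS (int j)" using \<open>i = n\<close> by (simp add: numer_def)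
    have "(mo QX 4 - 1) * (numer n j i * (1 + mo QX (4 * int n - 2)))
        = SS (int j) * (1 + mo QX (4 * int n - 2)) * (mo QX 4 - 1)"
      by (simp only: e2 mult_ac)
    also have "\<dots> = ((mo QX 4 - 1) * PP n j i) * EE n"
      unfolding e1 EE_def by (rule LP2[OF fls_X_nonzero])
    finally show ?thesis by (simp only: mult_ac)
  qed
  then have "numer n j i * (1 + mo QX (4 * int n - 2)) = PP n j i * EE n"
    using m41_nz by simp
  then have "numer n j i / EE n = PP n j i / (1 + mo QX (4 * int n - 2))"
    using E nz by (simp add: frac_eq_eq)
  then show ?thesis using j i by (simp add: Bc_def)
qed

lemma star1: fixes n i j k :: int
  assumes "1 \<le> i" "i < n" "i \<le> j" "j \<le> n" "0 \<le> k" "k \<le> n - 1"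
  shows "(ap (2*j - 2*i + 2) i (2*k) \<or> ap (4*n - 2*j - 2*i) i (2*k)) \<longleftrightarrow>
   ((i + 1 \<le> k + j \<and> k + j \<le> 2 * n - i - 1 \<and>
               1 - i \<le> k - j \<and> k - j \<le> i - 1 \<and>
               (k + j) - (i + 1) \<ge> 0 \<and> even ((k + j) - (i + 1)) \<and>
               (k - j) - (1 - i) \<ge> 0 \<and> even ((k - j) - (1 - i)))
              \<or> 2 * n - i \<le> k + j)"
proof -
  define e where "e = even (k+i+j+1)"
  have p1: "((4::int) dvd (2*k - (2*j-2*i+2))) = e" unfolding e_def by presburger
  have p2: "((4::int) dvd (2*k - (4*n-2*j-2*i))) = (\<not> e)" unfolding e_def by presburger
  have p3: "even(k + j - (i+1)) = e" unfolding e_def by presburger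
  have p4: "even(k - j - (1-i)) = e" unfolding e_def by presburger
  have q1: "e \<Longrightarrow> k \<noteq> j + i" unfolding e_def by presburger
  have q2: "e \<Longrightarrow> k \<noteq> 2*n - i - j" unfolding e_def by presburger
  show ?thesis
  proof (cases e)
    case True
    then have "k \<noteq> j + i" "k \<noteq> 2*n - i - j" using q1 q2 by auto
    then show ?thesis unfolding ap_def p1 p2 p3 p4 using True assms by auto
  next
    case False
    then show ?thesis unfolding ap_def p1 p2 p3 p4 using assms by auto
  qed
qed

lemma star2: fixes n i j k :: int
  assumes "1 \<le> j" "j < i" "i < n" "0 \<le> k" "k \<le> n - 1"
  shows "(ap (2*i - 2*j + 2) j (2*k) \<or> ap (4*n - 2*i - 2*j) j (2*k)) \<longleftrightarrow>
   ((i + 1 \<le> k + j \<and> k + j \<le> 2 * n - i - 1 \<and>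
               1 - i \<le> k - j \<and> k - j \<le> i - 1 \<and>
               (k + j) - (i + 1) \<ge> 0 \<and> even ((k + j) - (i + 1)) \<and>
               (k - j) - (1 - i) \<ge> 0 \<and> even ((k - j) - (1 - i)))
              \<or> 2 * n - i \<le> k + j)"
proof -
  define e where "e = even (k+i+j+1)"
  have p1: "((4::int) dvd (2*k - (2*i-2*j+2))) = e" unfolding e_def by presburger
  have p2: "((4::int) dvd (2*k - (4*n-2*i-2*j))) = (\<not> e)" unfolding e_def by presburger
  have p3: "even(k + j - (i+1)) = e" unfolding e_def by presburger
  have p4: "even(k - j - (1-i)) = e" unfolding e_def by presburger
  have q1: "e \<Longrightarrow> k \<noteq> j + i" unfolding e_def by presburger
  have q2: "e \<Longrightarrow> k \<noteq> 2*n - i - j" unfolding e_def by presburger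
  show ?thesis
  proof (cases e)
    case True
    then have "k \<noteq> j + i" "k \<noteq> 2*n - i - j" using q1 q2 by auto
    then show ?thesis unfolding ap_def p1 p2 p3 p4 using True assms by auto
  next
    case False
    then show ?thesis unfolding ap_def p1 p2 p3 p4 using assms by auto
  qed
qed

lemma excl: fixes i j k n :: int
  shows "\<not> (ap (2*i - 2*j + 2) j m \<and> ap (4*n - 2*i - 2*j) j m)"
proof -
  have "\<not> ((4::int) dvd (m - (2*i-2*j+2)) \<and> 4 dvd (m - (4*n-2*i-2*j)))" by presburger
  then show ?thesis unfolding ap_def by blast
qed

lemma starn: fixes n j k :: int
  assumes "1 \<le> j" "j \<le> n" "0 \<le> k" "k \<le> n - 1"
  shows "ap (2*n + 1 - 2*j) j (2*k+1) \<longleftrightarrow> (k + j - n \<ge> 0 \<and> even (k + j - n))"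
proof -
  have p: "((4::int) dvd (2*k+1 - (2*n+1-2*j))) = even (k + j - n)" by presburger
  show ?thesis unfolding ap_def p using assms by auto
qed

lemma ap_refl: fixes c1 c2 a N x :: int
  assumes "c1 + c2 + 4*a - 4 = N"
  shows "ap c1 a (N - x) = ap c2 a x"
proof -
  have d: "((4::int) dvd (N - x - c1)) = (4 dvd (x - c2))"
  proof -
    have "N - x - c1 = 4 * (a - 1) - (x - c2)" using assms by simp
    then show ?thesis by (simp add: dvd_diff_commute) presburger
  qed
  show ?thesis
  proof (cases "(4::int) dvd (x - c2)")
    case True
    then obtain t where t: "x - c2 = 4 * t" by (auto elim: dvdE)
    have "(c1 \<le> N - x \<and> N - x < c1 + 4 * a) = (c2 \<le> x \<and> x < c2 + 4 * a)"
      using assms t by presburger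
    then show ?thesis unfolding ap_def d using True by simp
  next
    case False
    then show ?thesis unfolding ap_def d by simp
  qed
qed

lemma ap_bounds: "ap c a r \<Longrightarrow> c \<le> r \<and> r \<le> c + 4*a - 4"
  unfolding ap_def by presburger

lemma ap_par: "ap c a r \<Longrightarrow> even r = even c"
  unfolding ap_def by presburger

lemma PP_nth: "fls_nth (PP n j i) r = (if i < n then
      (if ap (2*int (max j i) - 2*int (min j i) + 2) (int (min j i)) r then 1 else 0)
    + (if ap (4*int n - 2*int (max j i) - 2*int (min j i)) (int (min j i)) r then 1 else 0)
    else (if ap (2*int n + 1 - 2*int j) (int j) r then 1 else 0))"
  by (simp add: PP_def APf_nth)

lemma PP_supp:
  assumes n: "2 \<le> n" and j: "1 \<le> j" "j \<le> n" and i: "1 \<le> i" "i \<le> n"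
    and r: "r < 0 \<or> 4 * int n - 2 \<le> r"
  shows "fls_nth (PP n j i) r = 0"
proof (cases "i < n")
  case True
  have b: "1 \<le> int (min j i)" "int (min j i) \<le> int (max j i)" "int (max j i) \<le> int n"
    "int (min j i) \<le> int n - 1"
    using True j i by auto
  have "\<not> ap (2*int (max j i) - 2*int (min j i) + 2) (int (min j i)) r"
    using ap_bounds[of "2*int (max j i) - 2*int (min j i) + 2" "int (min j i)" r] b r by linarith
  moreover have "\<not> ap (4*int n - 2*int (max j i) - 2*int (min j i)) (int (min j i)) r"
    using ap_bounds[of "4*int n - 2*int (max j i) - 2*int (min j i)" "int (min j i)" r] b r by linarith
  ultimately show ?thesis using True by (simp add: PP_nth)
next
  case False
  have "\<not> ap (2*int n + 1 - 2*int j) (int j) r"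
    using ap_bounds[of "2*int n + 1 - 2*int j" "int j" r] j r by linarith
  then show ?thesis using False by (simp add: PP_nth)
qed

lemma coef:
  assumes n: "2 \<le> n" and j: "1 \<le> j" "j \<le> n" and i: "1 \<le> i" "i \<le> n" and m: "0 \<le> m"
  shows "fls_nth (invQCartanB n j i) m = (-1) ^ nat (m div (4 * int n - 2)) * fls_nth (PP n j i) (m mod (4 * int n - 2))"
proof -
  have "invQCartanB n j i = PP n j i / (1 + mo QX (4 * int n - 2))"
    using inv_eq[OF n] Bc_PP[OF n j i] by simp
  also have "\<dots> = Abs_fls (dv (4 * int n - 2) (PP n j i))"
    by (rule div_series) (use n PP_supp[OF n j i] in auto)
  finally show ?thesis
    using m by (simp add: nth_Abs_fls_lower_bound[of 0] dv_def)
qed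

lemma coef_small:
  assumes n: "2 \<le> n" and j: "1 \<le> j" "j \<le> n" and i: "1 \<le> i" "i \<le> n" and m: "0 \<le> m" "m < 4 * int n - 2"
  shows "fls_nth (invQCartanB n j i) m = fls_nth (PP n j i) m"
  using coef[OF n j i m(1)] m by simp

lemma odd_mod: "even (N::int) \<Longrightarrow> odd m \<Longrightarrow> odd (m mod N)"
  by (metis dvd_mod_iff even_mod_2_iff)
lemma even_mod: "even (N::int) \<Longrightarrow> even m \<Longrightarrow> even (m mod N)"
  by (simp add: dvd_mod)

definition STAR :: "int \<Rightarrow> int \<Rightarrow> int \<Rightarrow> int \<Rightarrow> bool" where
 "STAR n j i k = ((i + 1 \<le> k + j \<and> k + j \<le> 2 * n - i - 1 \<and>
               1 - i \<le> k - j \<and> k - j \<le> i - 1 \<and>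
               (k + j) - (i + 1) \<ge> 0 \<and> even ((k + j) - (i + 1)) \<and>
               (k - j) - (1 - i) \<ge> 0 \<and> even ((k - j) - (1 - i)))
              \<or> 2 * n - i \<le> k + j)"

lemma partA:
  assumes n: "2 \<le> n" and j: "1 \<le> j" "j \<le> n" and i: "1 \<le> i" "i \<le> n - 1"
  shows "ctilde n j i (- 2 * int k - 1) = 0"
proof -
  let ?N = "4 * int n - 2"
  let ?r = "(2 * int k + 1) mod ?N"
  have i': "i \<le> n" "i < n" using i n by auto
  have c: "ctilde n j i (- 2 * int k - 1) = (-1) ^ nat ((2 * int k + 1) div ?N) * fls_nth (PP n j i) ?r"
    unfolding ctilde_def using coef[OF n j i(1) i'(1), of "2 * int k + 1"] by (simp add: add.commute)
  have ro: "odd ?r" by (rule odd_mod) simp_all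
  have "\<not> ap (2*int (max j i) - 2*int (min j i) + 2) (int (min j i)) ?r"
    using ap_par ro by fastforce
  moreover have "\<not> ap (4*int n - 2*int (max j i) - 2*int (min j i)) (int (min j i)) ?r"
    using ap_par ro by fastforce
  ultimately have "fls_nth (PP n j i) ?r = 0" using i'(2) by (simp add: PP_nth)
  then show ?thesis using c by simp
qed

lemma partA2:
  assumes n: "2 \<le> n" and j: "1 \<le> j" "j \<le> n"
  shows "ctilde n j n (- 2 * int k - 2) = 0"
proof -
  let ?N = "4 * int n - 2"
  let ?r = "(2 * int k + 2) mod ?N"
  have c: "ctilde n j n (- 2 * int k - 2) = (-1) ^ nat ((2 * int k + 2) div ?N) * fls_nth (PP n j n) ?r"
    unfolding ctilde_def using coef[OF n j _ order.refl, of "2 * int k + 2"] n by (simp add: add.commute)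
  have re: "even ?r" by (rule even_mod) simp_all
  have "\<not> ap (2*int n + 1 - 2*int j) (int j) ?r"
    using ap_par re by fastforce
  then have "fls_nth (PP n j n) ?r = 0" by (simp add: PP_nth)
  then show ?thesis using c by simp
qed

lemma partB1:
  assumes n: "2 \<le> n" and j: "1 \<le> j" "j \<le> n" and i: "1 \<le> i" "i \<le> n - 1" and k: "k \<le> n - 1"
  shows "ctilde n j i (- 2 * int k) = (if STAR (int n) (int j) (int i) (int k) then 1 else 0)"
proof -
  have i': "i \<le> n" "i < n" using i n by auto
  have c: "ctilde n j i (- 2 * int k) = fls_nth (PP n j i) (2 * int k)"
    unfolding ctilde_def using coef_small[OF n j i(1) i'(1), of "2 * int k"] k n by simp
  define c1 where "c1 = 2*int (max j i) - 2*int (min j i) + 2"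
  define c2 where "c2 = 4*int n - 2*int (max j i) - 2*int (min j i)"
  have P: "fls_nth (PP n j i) (2 * int k) = (if ap c1 (int (min j i)) (2 * int k) then 1 else 0)
     + (if ap c2 (int (min j i)) (2 * int k) then 1 else 0)"
    using i'(2) by (simp add: PP_nth c1_def c2_def)
  have eqv: "(ap c1 (int (min j i)) (2 * int k) \<or> ap c2 (int (min j i)) (2 * int k)) = STAR (int n) (int j) (int i) (int k)"
    and ex: "\<not> (ap c1 (int (min j i)) (2 * int k) \<and> ap c2 (int (min j i)) (2 * int k))"
  proof -
    show "(ap c1 (int (min j i)) (2 * int k) \<or> ap c2 (int (min j i)) (2 * int k)) = STAR (int n) (int j) (int i) (int k)"
    proof (cases "i \<le> j")
      case True
      then have mm: "max j i = j" "min j i = i" by auto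
      show ?thesis unfolding c1_def c2_def STAR_def mm
        by (rule star1) (use i i' j k True n in auto)
    next
      case False
      then have mm: "max j i = i" "min j i = j" by auto
      show ?thesis unfolding c1_def c2_def STAR_def mm
        by (rule star2) (use i i' j k False n in auto)
    qed
    show "\<not> (ap c1 (int (min j i)) (2 * int k) \<and> ap c2 (int (min j i)) (2 * int k))"
    proof (cases "i \<le> j")
      case True
      then have mm: "max j i = j" "min j i = i" by auto
      show ?thesis unfolding c1_def c2_def mm by (rule excl)
    next
      case False
      then have mm: "max j i = i" "min j i = j" by auto
      show ?thesis unfolding c1_def c2_def mm by (rule excl)
    qed
  qed
  show ?thesis unfolding c P using eqv ex by auto
qed

lemma partB2:
  assumes n: "2 \<le> n" and j: "1 \<le> j" "j \<le> n" and k: "k \<le> n - 1"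
  shows "ctilde n j n (- 2 * int k - 1) = (if int k + int j - int n \<ge> 0 \<and> even (int k + int j - int n) then 1 else 0)"
proof -
  have c: "ctilde n j n (- 2 * int k - 1) = fls_nth (PP n j n) (2 * int k + 1)"
    unfolding ctilde_def using coef_small[OF n j _ order.refl, of "2 * int k + 1"] k n by (simp add: add.commute)
  have "ap (2*int n + 1 - 2*int j) (int j) (2 * int k + 1) \<longleftrightarrow> (int k + int j - int n \<ge> 0 \<and> even (int k + int j - int n))"
    by (rule starn) (use j k n in auto)
  then show ?thesis unfolding c by (simp add: PP_nth)
qed

lemma partC1:
  assumes n: "2 \<le> n" and j: "1 \<le> j" "j \<le> n" and i: "1 \<le> i" "i \<le> n - 1" and k: "k \<le> n - 1"
  shows "ctilde n j i (- 2 * int k) = ctilde n j i (- 4 * int n + 2 + 2 * int k)"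
proof -
  have i': "i \<le> n" "i < n" using i n by auto
  define c1 where "c1 = 2*int (max j i) - 2*int (min j i) + 2"
  define c2 where "c2 = 4*int n - 2*int (max j i) - 2*int (min j i)"
  define a where "a = int (min j i)"
  have b: "1 \<le> a" "a \<le> int (max j i)" "int (max j i) \<le> int n" "a \<le> int n - 1"
    using i' i j unfolding a_def by auto
  have P: "fls_nth (PP n j i) r = (if ap c1 a r then 1 else 0) + (if ap c2 a r then 1 else 0)" for r
    using i'(2) by (simp add: PP_nth c1_def c2_def a_def)
  have L: "ctilde n j i (- 2 * int k) = fls_nth (PP n j i) (2 * int k)"
    unfolding ctilde_def using coef_small[OF n j i(1) i'(1), of "2 * int k"] k n by simp
  have R0: "ctilde n j i (- 4 * int n + 2 + 2 * int k) = (-1) ^ nat ((4 * int n - 2 - 2 * int k) div (4 * int n - 2)) * fls_nth (PP n j i) ((4 * int n - 2 - 2 * int k) mod (4 * int n - 2))"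
    unfolding ctilde_def using coef[OF n j i(1) i'(1), of "4 * int n - 2 - 2 * int k"] k n by simp
  show ?thesis
  proof (cases "k = 0")
    case True
    have z: "\<not> ap c1 a 0" "\<not> ap c2 a 0"
      using ap_bounds[of c1 a 0] ap_bounds[of c2 a 0] b unfolding c1_def c2_def a_def by linarith+
    have "ctilde n j i (- 2 * int k) = 0" using L True P z by simp
    moreover have "ctilde n j i (- 4 * int n + 2 + 2 * int k) = 0" using R0 True P z n by simp
    ultimately show ?thesis by simp
  next
    case False
    have kk: "int k \<le> int n - 1" "1 \<le> int k" using k n False by linarith+
    have R: "ctilde n j i (- 4 * int n + 2 + 2 * int k) = fls_nth (PP n j i) (4 * int n - 2 - 2 * int k)"
    proof -
      have "ctilde n j i (- 4 * int n + 2 + 2 * int k) = fls_nth (invQCartanB n j i) (4 * int n - 2 - 2 * int k)"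
        unfolding ctilde_def by (rule arg_cong[where f = "fls_nth (invQCartanB n j i)"]) simp
      also have "\<dots> = fls_nth (PP n j i) (4 * int n - 2 - 2 * int k)"
        by (rule coef_small[OF n j i(1) i'(1)]) (use kk n in auto)
      finally show ?thesis .
    qed
    have s: "c1 + c2 + 4 * a - 4 = 4 * int n - 2" unfolding c1_def c2_def a_def by simp
    have "ap c1 a (4 * int n - 2 - 2 * int k) = ap c2 a (2 * int k)"
      by (rule ap_refl) (use s in simp)
    moreover have "ap c2 a (4 * int n - 2 - 2 * int k) = ap c1 a (2 * int k)"
      by (rule ap_refl) (use s in simp)
    ultimately show ?thesis unfolding L R P by simp
  qed
qed

lemma partC2:
  assumes n: "2 \<le> n" and j: "1 \<le> j" "j \<le> n" and k: "k \<le> n - 1"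
  shows "ctilde n j n (- 2 * int k - 1) = ctilde n j n (- 4 * int n + 3 + 2 * int k)"
proof -
  have L: "ctilde n j n (- 2 * int k - 1) = fls_nth (PP n j n) (2 * int k + 1)"
    unfolding ctilde_def using coef_small[OF n j _ order.refl, of "2 * int k + 1"] k n by (simp add: add.commute)
  have kk: "int k \<le> int n - 1" using k n by linarith
  have R: "ctilde n j n (- 4 * int n + 3 + 2 * int k) = fls_nth (PP n j n) (4 * int n - 2 - (2 * int k + 1))"
  proof -
    have "ctilde n j n (- 4 * int n + 3 + 2 * int k) = fls_nth (invQCartanB n j n) (4 * int n - 2 - (2 * int k + 1))"
      unfolding ctilde_def by (rule arg_cong[where f = "fls_nth (invQCartanB n j n)"]) simp
    also have "\<dots> = fls_nth (PP n j n) (4 * int n - 2 - (2 * int k + 1))"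
      by (rule coef_small[OF n j _ order.refl]) (use kk n in auto)
    finally show ?thesis .
  qed
  have "ap (2*int n + 1 - 2*int j) (int j) (4 * int n - 2 - (2 * int k + 1)) = ap (2*int n + 1 - 2*int j) (int j) (2 * int k + 1)"
    by (rule ap_refl) simp
  then show ?thesis unfolding L R by (simp add: PP_nth)
qed

theorem lemmaA1:
  fixes n :: nat
  assumes "n \<ge> 2"
  shows
   "(\<forall>j\<in>{1..n}. \<forall>k::nat.
       (\<forall>i\<in>{1..n-1}. ctilde n j i (- 2 * int k - 1) = 0) \<and>
       ctilde n j n (- 2 * int k - 2) = 0)
    \<and>
    (\<forall>j\<in>{1..n}. \<forall>k::nat. k \<le> n - 1 \<longrightarrow>
       (\<forall>i\<in>{1..n-1}. ctilde n j i (- 2 * int k) =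
          (if (int i + 1 \<le> int k + int j \<and> int k + int j \<le> 2 * int n - int i - 1 \<and>
               1 - int i \<le> int k - int j \<and> int k - int j \<le> int i - 1 \<and>
               (int k + int j) - (int i + 1) \<ge> 0 \<and> even ((int k + int j) - (int i + 1)) \<and>
               (int k - int j) - (1 - int i) \<ge> 0 \<and> even ((int k - int j) - (1 - int i)))
              \<or> 2 * int n - int i \<le> int k + int j
           then 1 else 0)) \<and>
       ctilde n j n (- 2 * int k - 1) =
          (if int k + int j - int n \<ge> 0 \<and> even (int k + int j - int n) then 1 else 0))
    \<and>
    (\<forall>j\<in>{1..n}. \<forall>k::nat. k \<le> n - 1 \<longrightarrow>
       (\<forall>i\<in>{1..n-1}. ctilde n j i (- 2 * int k) = ctilde n j i (- 4 * int n + 2 + 2 * int k)) \<and>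
       ctilde n j n (- 2 * int k - 1) = ctilde n j n (- 4 * int n + 3 + 2 * int k))"
proof (intro conjI ballI allI impI)
  fix j k i assume j: "j \<in> {1..n}" and i: "i \<in> {1..n-1}"
  then show "ctilde n j i (- 2 * int k - 1) = 0" using partA[OF assms] by auto
next
  fix j k assume j: "j \<in> {1..n}"
  then show "ctilde n j n (- 2 * int k - 2) = 0" using partA2[OF assms] by auto
next
  fix j k i assume j: "j \<in> {1..n}" and k: "k \<le> n - 1" and i: "i \<in> {1..n-1}"
  then show "ctilde n j i (- 2 * int k) =
          (if (int i + 1 \<le> int k + int j \<and> int k + int j \<le> 2 * int n - int i - 1 \<and>
               1 - int i \<le> int k - int j \<and> int k - int j \<le> int i - 1 \<and>
               (int k + int j) - (int i + 1) \<ge> 0 \<and> even ((int k + int j) - (int i + 1)) \<and>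
               (int k - int j) - (1 - int i) \<ge> 0 \<and> even ((int k - int j) - (1 - int i)))
              \<or> 2 * int n - int i \<le> int k + int j
           then 1 else 0)"
    using partB1[OF assms, of j i k] unfolding STAR_def by auto
next
  fix j k assume j: "j \<in> {1..n}" and k: "k \<le> n - 1"
  then show "ctilde n j n (- 2 * int k - 1) =
          (if int k + int j - int n \<ge> 0 \<and> even (int k + int j - int n) then 1 else 0)"
    using partB2[OF assms] by auto
next
  fix j k i assume j: "j \<in> {1..n}" and k: "k \<le> n - 1" and i: "i \<in> {1..n-1}"
  then show "ctilde n j i (- 2 * int k) = ctilde n j i (- 4 * int n + 2 + 2 * int k)"
    using partC1[OF assms] by auto
next
  fix j k assume j: "j \<in> {1..n}" and k: "k \<le> n - 1"
  then show "ctilde n j n (- 2 * int k - 1) = ctilde n j n (- 4 * int n + 3 + 2 * int k)"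
    using partC2[OF assms] by auto
qed

end
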